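(* Let $a<b$, let $\alpha\in(0,1]$, let $k:[a,b]\to\mathbb{R}$ be a continuous nonnegative map, differentiable at every $t>a$, with $k(t)\neq 0$ and $k'(t)\neq 0$ whenever $t>a$. Let $f:[a,b]\to\mathbb{R}$ and let $t_0\in(a,b)$ with $t_0>0$. If $f$ is $\alpha$-differentiable at $t_0$, then $f$ is continuous at $t_0$.
   Context: For $k$ as in the claim, $f:[a,b]\to\mathbb{R}$, $\alpha\in(0,1]$ and $t\in(a,b)$, the generalized fractional derivative of $f$ of order $\alpha$ at $t$ is $$D^{\alpha}(f)(t)=f^{(\alpha)}(t):=\lim_{\varepsilon\to 0}\frac{f\left(t-k(t)+k(t)\,e^{\varepsilon\frac{(k(t))^{-\alpha}}{k'(t)}}\right)-f(t)}{\varepsilon},$$ and $f$ is called $\alpha$-differentiable at $t$ if this limit exists (for $|\varepsilon|$ small the argument of $f$ lies in $[a,b]$). *)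

theory Defs
  imports "HOL-Analysis.Analysis"
begin

definition gen_frac_quot ::
  "(real \<Rightarrow> real) \<Rightarrow> (real \<Rightarrow> real) \<Rightarrow> real \<Rightarrow> (real \<Rightarrow> real) \<Rightarrow> real \<Rightarrow> real \<Rightarrow> real" where
  "gen_frac_quot k k' \<alpha> f t \<epsilon> =
     (f (t - k t + k t * exp (\<epsilon> * (k t) powr (- \<alpha>) / k' t)) - f t) / \<epsilon>"

definition alpha_differentiable ::
  "(real \<Rightarrow> real) \<Rightarrow> (real \<Rightarrow> real) \<Rightarrow> real \<Rightarrow> (real \<Rightarrow> real) \<Rightarrow> real \<Rightarrow> bool" where
  "alpha_differentiable k k' \<alpha> f t \<longleftrightarrow>
     (\<exists>L. (gen_frac_quot k k' \<alpha> f t \<longlongrightarrow> L) (at 0))"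

end

theory Submission
  imports Defs
begin

theorem mainTheorem2:
  fixes a b \<alpha> t0 :: real and k k' f :: "real \<Rightarrow> real"
  assumes "a < b"
    and "\<alpha> \<in> {0<..1}"
    and "continuous_on {a..b} k"
    and "\<forall>t\<in>{a..b}. k t \<ge> 0"
    and "\<forall>t\<in>{a<..b}. (k has_real_derivative k' t) (at t within {a..b})"
    and "\<forall>t\<in>{a<..b}. k t \<noteq> 0 \<and> k' t \<noteq> 0"
    and "t0 \<in> {a<..<b}" and "t0 > 0"
    and "alpha_differentiable k k' \<alpha> f t0"
  shows "isCont f t0"
proof -
  define K where "K = k t0"
  define d where "d = k' t0"
  define P where "P = K powr (- \<alpha>)"
  have t0: "t0 \<in> {a<..b}" "t0 \<in> {a..b}" using assms(7) by auto
  have K0: "K > 0"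
  proof -
    have "k t0 \<ge> 0" "k t0 \<noteq> 0" using assms(4,6) t0 by auto
    thus ?thesis unfolding K_def by linarith
  qed
  have d0: "d \<noteq> 0" using assms(6) t0 unfolding d_def by blast
  have P0: "P > 0" using K0 unfolding P_def by simp
  obtain L where L: "(gen_frac_quot k k' \<alpha> f t0 \<longlongrightarrow> L) (at 0)"
    using assms(9) unfolding alpha_differentiable_def by blast
  define h where "h x = ln ((x - t0 + K) / K) * d / P" for x
  have hc: "(h \<longlongrightarrow> h t0) (at t0)"
    unfolding h_def using K0 P0
    by (intro tendsto_intros) auto
  have h0: "h t0 = 0" unfolding h_def using K0 by simp
  have ev: "eventually (\<lambda>x. x - t0 + K > 0) (at t0)"
  proof -
    have "((\<lambda>x. x - t0 + K) \<longlongrightarrow> K) (at t0)"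
      by (auto intro!: tendsto_eq_intros)
    thus ?thesis using K0 order_tendstoD(1) by blast
  qed
  have evne0: "\<And>x. x - t0 + K > 0 \<Longrightarrow> x \<noteq> t0 \<Longrightarrow> h x \<noteq> 0"
  proof -
    fix x assume x: "x - t0 + K > 0" and "x \<noteq> t0"
    hence "(x - t0 + K) / K \<noteq> 1" using K0 by (auto simp: field_simps)
    hence "ln ((x - t0 + K) / K) \<noteq> 0" using x K0 by simp
    thus "h x \<noteq> 0" unfolding h_def using d0 P0 by simp
  qed
  have evne: "eventually (\<lambda>x. h x \<noteq> 0) (at t0)"
  proof -
    have "eventually (\<lambda>x. x \<noteq> t0) (at t0)" by (simp add: eventually_at_filter)
    from eventually_conj[OF ev this] show ?thesis
      by (rule eventually_mono) (use evne0 in blast)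
  qed
  have fh: "filterlim h (at 0) (at t0)"
    by (rule filterlim_atI) (use hc h0 evne in auto)
  have q: "((\<lambda>x. gen_frac_quot k k' \<alpha> f t0 (h x)) \<longlongrightarrow> L) (at t0)"
    using filterlim_compose[OF L fh] by (simp add: o_def)
  have "((\<lambda>x. f t0 + h x * gen_frac_quot k k' \<alpha> f t0 (h x)) \<longlongrightarrow> f t0 + 0 * L) (at t0)"
    by (intro tendsto_intros q) (use hc h0 in simp)
  hence lim: "((\<lambda>x. f t0 + h x * gen_frac_quot k k' \<alpha> f t0 (h x)) \<longlongrightarrow> f t0) (at t0)" by simp
  have "eventually (\<lambda>x. f t0 + h x * gen_frac_quot k k' \<alpha> f t0 (h x) = f x) (at t0)"
    using eventually_conj[OF ev evne]
  proof (rule eventually_mono)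
    fix x assume x: "x - t0 + K > 0 \<and> h x \<noteq> 0"
    have "h x * P / d = ln ((x - t0 + K) / K)" unfolding h_def using P0 d0 by simp
    hence "exp (h x * P / d) = (x - t0 + K) / K" using x K0 by simp
    hence "t0 - K + K * exp (h x * P / d) = x" using K0 by (simp add: field_simps)
    hence "t0 - k t0 + k t0 * exp (h x * k t0 powr - \<alpha> / k' t0) = x"
      unfolding K_def P_def d_def by simp
    thus "f t0 + h x * gen_frac_quot k k' \<alpha> f t0 (h x) = f x"
      using x unfolding gen_frac_quot_def by simp
  qed
  from tendsto_cong[OF this] lim have "(f \<longlongrightarrow> f t0) (at t0)" by simp
  thus ?thesis by (simp add: isCont_def)
qed

end
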